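(* Let $K, L$ be compact convex subsets of $\mathbb{R}^n$. Suppose that every triangle contained in $K$ can be translated inside $L$. If $W(K)=W(L)$, then $K$ and $L$ are translates of each other.
   Context: Here a triangle in $K$ means the convex hull of three points of $K$ (i.e. a polytope in $K$ with at most three vertices). For a compact convex set $K$ with support function $h_K(v)=\max_{x\in K} x\cdot v$, the mean width is $W(K) = \frac{2}{n \omega_n} \int_{S^{n-1}} h_K(u)\, du$, where $\omega_n$ is the volume of the Euclidean unit ball in $\mathbb{R}^n$ and $du$ is surface measure on the unit sphere $S^{n-1}$. *)

theory Defs
  imports "HOL-Analysis.Analysis"
begin

definition support_fun :: "'a::euclidean_space set \<Rightarrow> 'a \<Rightarrow> real" where
  "support_fun K v = (SUP x\<in>K. x \<bullet> v)"

text \<open>Surface (area) measure on the unit sphere, defined as the cone measure: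
  sigma(A) = n * lambda({t u. 0 < t < 1, u \<in> A}), i.e. n times the push-forward of
  Lebesgue measure on the punctured open unit ball under radial projection.\<close>
definition sphere_measure :: "'a::euclidean_space measure" where
  "sphere_measure = scale_measure (ennreal (real DIM('a)))
     (distr (restrict_space lborel (ball 0 1 - {0})) borel (\<lambda>x. x /\<^sub>R norm x))"

definition unit_ball_volume :: "'a::euclidean_space itself \<Rightarrow> real" where
  "unit_ball_volume _ = measure lborel (ball (0::'a) 1)"

definition mean_width :: "'a::euclidean_space set \<Rightarrow> real" where
  "mean_width K = 2 / (real DIM('a) * unit_ball_volume TYPE('a))
     * (\<integral>u. support_fun K u \<partial>sphere_measure)"

end

theory Submission
  imports Defs
begin


lemma sf_eqI:
  assumes "\<And>x. x \<in> K \<Longrightarrow> x \<bullet> v \<le> c" "p \<in> K" "p \<bullet> v = c"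
  shows "support_fun K v = c"
  unfolding support_fun_def
  by (rule cSup_eq_maximum) (use assms in auto)

lemma sf_attained:
  fixes K :: "'a::euclidean_space set"
  assumes "compact K" "K \<noteq> {}"
  shows "\<exists>x\<in>K. support_fun K v = x \<bullet> v \<and> (\<forall>y\<in>K. y \<bullet> v \<le> x \<bullet> v)"
proof -
  have "continuous_on K (\<lambda>x. x \<bullet> v)" by (intro continuous_intros)
  from continuous_attains_sup[OF assms this] obtain x where x: "x \<in> K" "\<forall>y\<in>K. y \<bullet> v \<le> x \<bullet> v" by blast
  then show ?thesis by (intro bexI[of _ x]) (auto intro!: sf_eqI[of K v _ x])
qed

lemma sf_upper:
  fixes K :: "'a::euclidean_space set"
  assumes "compact K" "x \<in> K"
  shows "x \<bullet> v \<le> support_fun K v"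
  using sf_attained[OF assms(1), of v] assms(2) by fastforce

lemma sf_homog:
  fixes K :: "'a::euclidean_space set"
  assumes "compact K" "K \<noteq> {}" "c \<ge> 0"
  shows "support_fun K (c *\<^sub>R v) = c * support_fun K v"
proof -
  obtain x where x: "x \<in> K" "support_fun K v = x \<bullet> v" "\<forall>y\<in>K. y \<bullet> v \<le> x \<bullet> v"
    using sf_attained[OF assms(1,2)] by blast
  show ?thesis
    by (rule sf_eqI[where p=x]) (use x assms(3) in \<open>auto intro: mult_left_mono\<close>)
qed

lemma sf_translate:
  fixes K :: "'a::euclidean_space set"
  assumes "compact K" "K \<noteq> {}"
  shows "support_fun ((\<lambda>x. t + x) ` K) v = t \<bullet> v + support_fun K v"
proof -
  obtain x where x: "x \<in> K" "support_fun K v = x \<bullet> v" "\<forall>y\<in>K. y \<bullet> v \<le> x \<bullet> v"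
    using sf_attained[OF assms(1,2)] by blast
  show ?thesis
    by (rule sf_eqI[where p="t+x"]) (use x in \<open>auto simp: inner_add_left\<close>)
qed

lemma sf_cont:
  fixes K :: "'a::euclidean_space set"
  assumes "compact K" "K \<noteq> {}"
  shows "continuous_on UNIV (support_fun K)"
proof -
  obtain B where B: "B > 0" "\<forall>x\<in>K. norm x \<le> B"
    using compact_imp_bounded[OF assms(1)] bounded_pos by blast
  have *: "support_fun K u - support_fun K v \<le> B * dist u v" for u v
  proof -
    obtain x where x: "x \<in> K" "support_fun K u = x \<bullet> u"
      using sf_attained[OF assms(1,2)] by blast
    have "x \<bullet> v \<le> support_fun K v" by (rule sf_upper[OF assms(1) x(1)])
    moreover have "x \<bullet> (u - v) \<le> norm x * norm (u - v)" by (rule norm_cauchy_schwarz)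
    moreover have "norm x * norm (u - v) \<le> B * norm (u - v)"
      using B x(1) by (intro mult_right_mono) auto
    ultimately show ?thesis using x by (simp add: inner_diff_right dist_norm)
  qed
  have "B-lipschitz_on UNIV (support_fun K)"
  proof (rule lipschitz_onI)
    fix u v :: 'a
    show "dist (support_fun K u) (support_fun K v) \<le> B * dist u v"
      using *[of u v] *[of v u] by (simp add: dist_real_def dist_commute abs_le_iff)
  qed (use B in auto)
  then show ?thesis by (rule lipschitz_on_continuous_on)
qed

lemma sf_determines:
  fixes K L :: "'a::euclidean_space set"
  assumes "compact K" "convex K" "K \<noteq> {}" "compact L" "convex L" "L \<noteq> {}"
    and eq: "\<And>v. support_fun K v = support_fun L v"
  shows "K = L"
proof -
  have sub: "A \<subseteq> B" if h: "compact A" "compact B" "convex B" "B \<noteq> {}" "A \<noteq> {}"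
     "\<And>v. support_fun A v = support_fun B v" for A B :: "'a set"
  proof
    fix z assume z: "z \<in> A"
    show "z \<in> B"
    proof (rule ccontr)
      assume "z \<notin> B"
      then obtain a b where ab: "a \<bullet> z < b" "\<forall>x\<in>B. b < a \<bullet> x"
        using separating_hyperplane_closed_point[OF h(3) compact_imp_closed[OF h(2)]] by blast
      obtain x where x: "x \<in> B" "support_fun B (-a) = x \<bullet> (-a)"
        using sf_attained[OF h(2,4)] by blast
      have "z \<bullet> (-a) \<le> support_fun A (-a)" by (rule sf_upper[OF h(1) z])
      then show False using x ab h(6)[of "-a"] by (auto simp: inner_commute)
    qed
  qed
  show ?thesis using sub[of K L] sub[of L K] assms by auto
qed



lemma sphere_integral:
  fixes f :: "'a::euclidean_space \<Rightarrow> real"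
  assumes fc: "continuous_on UNIV f"
  shows "integral\<^sup>L (sphere_measure :: 'a measure) f =
     real DIM('a) * (\<integral>x. indicator (ball 0 1 - {0}) x * f (x /\<^sub>R norm x) \<partial>lborel)"
proof -
  define D :: "'a set" where "D = ball 0 1 - {0}"
  define N where "N = distr (restrict_space lborel D) borel (\<lambda>x::'a. x /\<^sub>R norm x)"
  have fm[measurable]: "f \<in> borel_measurable borel"
    using fc by (rule borel_measurable_continuous_onI)
  have Dm[measurable]: "D \<in> sets borel" unfolding D_def by auto
  have sm: "(sphere_measure :: 'a measure) = density N (\<lambda>_. ennreal (real DIM('a)))"
    unfolding sphere_measure_def N_def[symmetric]
    by (rule measure_eqI) (auto simp: N_def D_def emeasure_density nn_integral_cmult_indicator)
  have "integral\<^sup>L (sphere_measure :: 'a measure) f = integral\<^sup>L N (\<lambda>x. real DIM('a) *\<^sub>R f x)"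
    unfolding sm by (rule integral_density) (auto simp: N_def)
  also have "\<dots> = real DIM('a) * integral\<^sup>L N f" by simp
  also have "integral\<^sup>L N f = integral\<^sup>L (restrict_space lborel D) (\<lambda>x. f (x /\<^sub>R norm x))"
    unfolding N_def by (rule integral_distr) (auto intro: measurable_restrict_space1)
  also have "\<dots> = (\<integral>x. indicator D x *\<^sub>R f (x /\<^sub>R norm x) \<partial>lborel)"
    by (rule integral_restrict_space) auto
  finally show ?thesis by (simp add: D_def)
qed



definition J :: "('a::euclidean_space \<Rightarrow> real) \<Rightarrow> real" where
  "J f = (\<integral>x. indicator (ball 0 1 - {0}) x * f (x /\<^sub>R norm x) \<partial>lborel)"

lemma J_integrable:
  fixes f :: "'a::euclidean_space \<Rightarrow> real"
  assumes fc: "continuous_on UNIV f"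
  shows "integrable lborel (\<lambda>x. indicator (ball 0 1 - {0}) x * f (x /\<^sub>R norm x))"
proof -
  have fm[measurable]: "f \<in> borel_measurable borel"
    using fc by (rule borel_measurable_continuous_onI)
  have "compact (f ` sphere (0::'a) 1)"
    by (rule compact_continuous_image) (auto intro: continuous_on_subset[OF fc])
  then obtain B where B: "\<forall>y\<in>f ` sphere (0::'a) 1. norm y \<le> B"
    using compact_imp_bounded bounded_iff by metis
  have D[measurable]: "ball (0::'a) 1 - {0} \<in> sets borel" by auto
  have "emeasure lborel (ball (0::'a) 1 - {0}) < \<infinity>"
    by (rule le_less_trans[OF emeasure_mono emeasure_lborel_ball_finite]) auto
  then have "integrable lborel (indicator (ball (0::'a) 1 - {0}) :: 'a \<Rightarrow> real)"
    by (intro integrable_real_indicator) auto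
  then have ib: "integrable lborel (\<lambda>x. indicator (ball (0::'a) 1 - {0}) x * B)"
    by (rule integrable_mult_left)
  show ?thesis
  proof (rule Bochner_Integration.integrable_bound[OF ib])
    show "(\<lambda>x. indicator (ball 0 1 - {0}) x * f (x /\<^sub>R norm x)) \<in> borel_measurable lborel"
      by measurable
    show "AE x in lborel. norm (indicator (ball 0 1 - {0}) x * f (x /\<^sub>R norm x))
        \<le> norm (indicator (ball (0::'a) 1 - {0}) x * B)"
    proof (rule AE_I2)
      fix x :: 'a
      show "norm (indicator (ball 0 1 - {0}) x * f (x /\<^sub>R norm x))
        \<le> norm (indicator (ball (0::'a) 1 - {0}) x * B)"
      proof (cases "x \<in> ball 0 1 - {0}")
        case True
        then have "x /\<^sub>R norm x \<in> sphere 0 1" by auto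
        then have "norm (f (x /\<^sub>R norm x)) \<le> B" using B by auto
        then show ?thesis using True by auto
      qed auto
    qed
  qed
qed

lemma lborel_uminus: "distr lborel borel uminus = (lborel :: 'a::euclidean_space measure)"
  using lborel_affine[of "-1" "0::'a"] by (simp add: density_1)

lemma J_symm:
  fixes f :: "'a::euclidean_space \<Rightarrow> real"
  assumes fc: "continuous_on UNIV f"
  shows "J (\<lambda>u. f (- u)) = J f"
proof -
  have fm[measurable]: "f \<in> borel_measurable borel"
    using fc by (rule borel_measurable_continuous_onI)
  have D[measurable]: "ball (0::'a) 1 - {0} \<in> sets borel" by auto
  have "J f = integral\<^sup>L (distr lborel borel uminus) (\<lambda>x. indicator (ball (0::'a) 1 - {0}) x * f (x /\<^sub>R norm x))"
    unfolding J_def lborel_uminus ..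
  also have "\<dots> = (\<integral>x. indicator (ball (0::'a) 1 - {0}) (-x) * f ((-x) /\<^sub>R norm (-x)) \<partial>lborel)"
    by (rule integral_distr) auto
  also have "\<dots> = J (\<lambda>u. f (- u))"
    unfolding J_def by (intro Bochner_Integration.integral_cong) (auto simp: indicator_def)
  finally show ?thesis ..
qed

lemma J_pos:
  fixes F :: "'a::euclidean_space \<Rightarrow> real"
  assumes fc: "continuous_on UNIV F" and nn: "\<And>u. F u \<ge> 0" and J0: "J F = 0"
    and u: "norm u = 1"
  shows "F u = 0"
proof (rule ccontr)
  assume "F u \<noteq> 0"
  then have Fu: "F u > 0" using nn[of u] by auto
  define G where "G = (\<lambda>x. indicator (ball (0::'a) 1 - {0}) x * F (x /\<^sub>R norm x))"
  have fm[measurable]: "F \<in> borel_measurable borel"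
    using fc by (rule borel_measurable_continuous_onI)
  have D[measurable]: "ball (0::'a) 1 - {0} \<in> sets borel" by auto
  have "AE x in lborel. G x = 0"
    using J0 J_integrable[OF fc] nn
    by (subst integral_nonneg_eq_0_iff_AE[symmetric]) (auto simp: G_def J_def)
  \<comment> \<open>find a ball around u/2 where G is positive\<close>
  have cont: "continuous (at ((1/2) *\<^sub>R u)) (\<lambda>x. F (x /\<^sub>R norm x))"
    using u
    by (intro continuous_at_compose[where f="\<lambda>x. x /\<^sub>R norm x" and g=F, unfolded o_def]
        continuous_intros continuous_on_interior[OF fc]) auto
  obtain d where d: "d > 0" "\<And>x. dist x ((1/2) *\<^sub>R u) < d \<Longrightarrow> dist (F (x /\<^sub>R norm x)) (F (((1/2) *\<^sub>R u) /\<^sub>R norm ((1/2) *\<^sub>R u))) < F u"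
    using cont[unfolded continuous_at_eps_delta] Fu by blast
  have uu: "((1/2) *\<^sub>R u) /\<^sub>R norm ((1/2) *\<^sub>R u) = u" using u by auto
  define r where "r = min d (1/2)"
  have r: "r > 0" using d by (auto simp: r_def)
  have sub: "G x \<noteq> 0" if "x \<in> ball ((1/2) *\<^sub>R u) r" for x
  proof -
    have "dist x ((1/2) *\<^sub>R u) < d" using that by (auto simp: r_def dist_commute)
    then have "F (x /\<^sub>R norm x) > 0" using d(2)[of x] uu by (auto simp: dist_real_def)
    moreover have "x \<in> ball 0 1 - {0}"
    proof -
      have "dist x ((1/2) *\<^sub>R u) < 1/2" using that by (auto simp: r_def dist_commute)
      then have "norm x < 1" "x \<noteq> 0" using u norm_triangle_ineq2[of x "(1/2) *\<^sub>R u"]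
         norm_triangle_ineq3[of x "(1/2) *\<^sub>R u"] by (auto simp: dist_norm)
      then show ?thesis by auto
    qed
    ultimately show ?thesis by (auto simp: G_def)
  qed
  have "AE x in lborel. x \<notin> ball ((1/2) *\<^sub>R u) r"
    using \<open>AE x in lborel. G x = 0\<close> by eventually_elim (use sub in auto)
  then have "emeasure lborel (ball ((1/2) *\<^sub>R u) r) = 0"
    by (subst (asm) AE_iff_measurable[where N="ball ((1/2) *\<^sub>R u) r"]) auto
  moreover have "measure lborel (ball ((1/2) *\<^sub>R u) r) > 0" by (rule content_ball_pos[OF r])
  ultimately show False by (simp add: measure_def)
qed



lemma J_add:
  fixes f g :: "'a::euclidean_space \<Rightarrow> real"
  assumes "continuous_on UNIV f" "continuous_on UNIV g"
  shows "J (\<lambda>u. f u + g u) = J f + J g" "J (\<lambda>u. f u - g u) = J f - J g"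
  using J_integrable[OF assms(1)] J_integrable[OF assms(2)]
  by (auto simp: J_def distrib_left right_diff_distrib)

lemma sf_zero:
  fixes K :: "'a::euclidean_space set"
  assumes "compact K" "K \<noteq> {}"
  shows "support_fun K 0 = 0"
  using sf_homog[OF assms, of 0 0] by simp

theorem corollary2p8:
  fixes K L :: "'a::euclidean_space set"
  assumes "compact K" "convex K" "K \<noteq> {}"
    and "compact L" "convex L" "L \<noteq> {}"
    and "\<forall>a\<in>K. \<forall>b\<in>K. \<forall>c\<in>K. \<exists>t. (\<lambda>x. t + x) ` (convex hull {a, b, c}) \<subseteq> L"
    and "mean_width K = mean_width L"
  shows "\<exists>t. L = (\<lambda>x. t + x) ` K"
proof -
  note K = assms(1,3) and L = assms(4,6)
  define hK where "hK = support_fun K"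
  define hL where "hL = support_fun L"
  have cK: "continuous_on UNIV hK" unfolding hK_def by (rule sf_cont[OF K])
  have cL: "continuous_on UNIV hL" unfolding hL_def by (rule sf_cont[OF L])
  have cKm: "continuous_on UNIV (\<lambda>u. hK (- u))"
    by (rule continuous_on_compose2[OF cK]) (auto intro: continuous_intros)
  have cLm: "continuous_on UNIV (\<lambda>u. hL (- u))"
    by (rule continuous_on_compose2[OF cL]) (auto intro: continuous_intros)
  have tri: "\<exists>t. \<forall>p\<in>{a,b,c}. \<forall>z. t \<bullet> z + p \<bullet> z \<le> hL z" if abc: "a \<in> K" "b \<in> K" "c \<in> K" for a b c
  proof -
    obtain t where t: "(\<lambda>x. t + x) ` (convex hull {a, b, c}) \<subseteq> L"
      using assms(7)[rule_format, OF abc] by (elim exE)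
    have tpL: "t + p \<in> L" if "p \<in> {a,b,c}" for p
    proof -
      have "p \<in> convex hull {a,b,c}" by (rule hull_inc[OF that])
      then show ?thesis using t by blast
    qed
    have "t \<bullet> z + p \<bullet> z \<le> hL z" if "p \<in> {a,b,c}" for p z
      using sf_upper[OF assms(4) tpL[OF that], of z] unfolding hL_def
      by (simp add: inner_add_left)
    then show ?thesis by blast
  qed
  have maxK: "\<exists>x\<in>K. hK v = x \<bullet> v" for v
    using sf_attained[OF K, of v] unfolding hK_def by blast
  have wle: "hK u + hK (-u) \<le> hL u + hL (-u)" for u
  proof -
    obtain a where a: "a \<in> K" "hK u = a \<bullet> u" using maxK by blast
    obtain b where b: "b \<in> K" "hK (-u) = b \<bullet> (-u)" using maxK by blast
    obtain t where t: "\<forall>p\<in>{a,b,a}. \<forall>z. t \<bullet> z + p \<bullet> z \<le> hL z" using tri[OF a(1) b(1) a(1)] by blast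
    have "t \<bullet> u + a \<bullet> u \<le> hL u" "t \<bullet> (-u) + b \<bullet> (-u) \<le> hL (-u)" using t by blast+
    then show ?thesis using a b by simp
  qed
  have n0: "real DIM('a) > 0" by simp
  have v0: "unit_ball_volume TYPE('a) > 0"
    unfolding unit_ball_volume_def by (rule content_ball_pos) simp
  have "(\<integral>u. hK u \<partial>sphere_measure) = (\<integral>u. hL u \<partial>(sphere_measure::'a measure))"
    using assms(8) n0 v0 unfolding mean_width_def hK_def[symmetric] hL_def[symmetric] by simp
  then have JKL: "J hK = J hL"
    unfolding sphere_integral[OF cK] sphere_integral[OF cL] J_def[symmetric] using n0 by simp
  define F where "F = (\<lambda>u. (hL u + hL (-u)) - (hK u + hK (-u)))"
  have cF: "continuous_on UNIV F" unfolding F_def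
    by (intro continuous_on_diff continuous_on_add cK cL cKm cLm)
  have "J F = (J hL + J (\<lambda>u. hL (-u))) - (J hK + J (\<lambda>u. hK (-u)))"
    unfolding F_def
    by (subst J_add(2), (intro continuous_on_add cK cL cKm cLm)+, subst J_add(1)[OF cL cLm],
        subst J_add(1)[OF cK cKm], rule refl)
  also have "\<dots> = 0" using JKL J_symm[OF cK] J_symm[OF cL] by simp
  finally have JF: "J F = 0" .
  have F1: "F u = 0" if "norm u = 1" for u
    by (rule J_pos[OF cF _ JF that]) (use wle in \<open>auto simp: F_def\<close>)
  have homK: "hK (c *\<^sub>R v) = c * hK v" if "c \<ge> 0" for c v
    unfolding hK_def by (rule sf_homog[OF K that])
  have homL: "hL (c *\<^sub>R v) = c * hL v" if "c \<ge> 0" for c v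
    unfolding hL_def by (rule sf_homog[OF L that])
  have weq: "hL u + hL (-u) = hK u + hK (-u)" for u
  proof (cases "u = 0")
    case True
    then show ?thesis using homK[of 0 0] homL[of 0 0] by simp
  next
    case False
    have u: "u = norm u *\<^sub>R (u /\<^sub>R norm u)" using False by simp
    have m: "- u = norm u *\<^sub>R (- (u /\<^sub>R norm u))" using False by simp
    have "F (u /\<^sub>R norm u) = 0" using False by (intro F1) simp
    then have "hL (u /\<^sub>R norm u) + hL (- (u /\<^sub>R norm u)) = hK (u /\<^sub>R norm u) + hK (- (u /\<^sub>R norm u))"
      unfolding F_def by simp
    then have "norm u * (hL (u /\<^sub>R norm u) + hL (- (u /\<^sub>R norm u))) = norm u * (hK (u /\<^sub>R norm u) + hK (- (u /\<^sub>R norm u)))"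
      by simp
    then show ?thesis
      apply (subst (1 3) u, subst (1 2) m)
      by (simp only: homK homL norm_ge_zero distrib_left)
  qed
  define g where "g = (\<lambda>u. hL u - hK u)"
  have godd: "g (-u) = - g u" for u using weq[of u] by (simp add: g_def)
  have gsub: "g (u + w) \<le> g u + g w" for u w
  proof -
    obtain a where a: "a \<in> K" "hK u = a \<bullet> u" using maxK by blast
    obtain b where b: "b \<in> K" "hK w = b \<bullet> w" using maxK by blast
    obtain c where c: "c \<in> K" "hK (-(u+w)) = c \<bullet> (-(u+w))" using maxK by blast
    obtain t where t: "\<forall>p\<in>{a,b,c}. \<forall>z. t \<bullet> z + p \<bullet> z \<le> hL z" using tri[OF a(1) b(1) c(1)] by blast
    have "t \<bullet> u + a \<bullet> u \<le> hL u" "t \<bullet> w + b \<bullet> w \<le> hL w"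
      "t \<bullet> (-(u+w)) + c \<bullet> (-(u+w)) \<le> hL (-(u+w))" using t by blast+
    then have "t \<bullet> u \<le> g u" "t \<bullet> w \<le> g w" "- (t \<bullet> (u + w)) \<le> g (-(u+w))"
      using a(2) b(2) c(2) inner_minus_right[of t "u+w"] unfolding g_def by linarith+
    then show ?thesis using godd[of "u+w"] by (simp add: inner_add_right)
  qed
  have gadd: "g (u + w) = g u + g w" for u w
  proof -
    have "-u + -w = -(u+w)" by simp
    then have "g (-(u+w)) \<le> g (-u) + g (-w)" using gsub[of "-u" "-w"] by metis
    then show ?thesis using gsub[of u w] godd[of "u+w"] godd[of u] godd[of w] by linarith
  qed
  have gh: "g (c *\<^sub>R v) = c * g v" for c v
  proof (cases "c \<ge> 0")
    case True then show ?thesis by (simp add: g_def homK homL right_diff_distrib)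
  next
    case False
    have "g (c *\<^sub>R v) = g (- ((-c) *\<^sub>R v))" by simp
    also have "\<dots> = - g ((-c) *\<^sub>R v)" by (rule godd)
    also have "\<dots> = c * g v"
    proof -
      have e1: "hK ((-c) *\<^sub>R v) = (-c) * hK v" using False by (intro homK) simp
      have e2: "hL ((-c) *\<^sub>R v) = (-c) * hL v" using False by (intro homL) simp
      show ?thesis unfolding g_def e1 e2 by (simp add: algebra_simps)
    qed
    finally show ?thesis .
  qed
  have lin: "linear g" by (rule linearI) (use gadd gh in auto)
  define t0 where "t0 = (\<Sum>i\<in>Basis. g i *\<^sub>R i)"
  have gt: "g v = t0 \<bullet> v" for v
    using Linear_Algebra.linear_componentwise[OF lin, of v 1]
    by (simp add: t0_def inner_sum_left inner_commute[of v] mult.commute)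
  have "L = (\<lambda>x. t0 + x) ` K"
  proof (rule sf_determines)
    show "compact ((\<lambda>x. t0 + x) ` K)" using compact_translation[OF assms(1)] by simp
    show "convex ((\<lambda>x. t0 + x) ` K)" using convex_translation[OF assms(2)] by simp
    show "support_fun L v = support_fun ((\<lambda>x. t0 + x) ` K) v" for v
      using gt[of v] unfolding sf_translate[OF K] g_def hK_def hL_def by simp
  qed (use assms in auto)
  then show ?thesis by blast
qed

end
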